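(* Let $p$ be a prime, $\mathbb F=\mathbb F_{p^2}$, $\beta\in\mathbb F$ with $\beta^p-\beta=1$, and in the rational function field $\mathbb F(y)$ put $x=y^p-y$ and $$\delta(y)=\prod_{a=1}^{p-1}\Big(\frac{\beta-(y+a)}{y+a}\Big)^{a}.$$ Then (i) in $\Omega^1_{\mathbb F(y)/\mathbb F}$, $$y^p\frac{dx}{x}-(\beta-y)^p\frac{dx}{1-x}=\frac{d\delta(y)}{\delta(y)};$$ (ii) $\dfrac{\delta(y+1)}{\delta(y)}\equiv\dfrac{x}{1-x}\mod \mathbb F(y)^{\times p}$. *)

theory Defs
  imports "HOL-Computational_Algebra.Polynomial" "HOL-Computational_Algebra.Fraction_Field"
begin

type_synonym 'a ratfun = "'a poly fract"

definition ratfun_of_poly :: "'a::field poly \<Rightarrow> 'a ratfun" where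
  "ratfun_of_poly p = Fract p 1"

definition ratfun_const :: "'a::field \<Rightarrow> 'a ratfun" where
  "ratfun_const c = ratfun_of_poly [:c:]"

definition ratfun_var :: "'a::field ratfun" where
  "ratfun_var = ratfun_of_poly [:0, 1:]"

text \<open>Since Omega^1_{k(y)/k} is free of rank one with basis dy and
  d f = (d/dy f) dy, a differential form g dy is identified with its coefficient g.\<close>
definition ratfun_deriv :: "'a::field ratfun \<Rightarrow> 'a ratfun" where
  "ratfun_deriv q = (THE d. \<forall>a b. b \<noteq> 0 \<longrightarrow> q = Fract a b \<longrightarrow>
       d = Fract (pderiv a * b - a * pderiv b) (b * b))"

definition dlog :: "'a::field ratfun \<Rightarrow> 'a ratfun" where
  "dlog f = ratfun_deriv f / f"

definition delta_fun :: "nat \<Rightarrow> 'a::field \<Rightarrow> 'a ratfun \<Rightarrow> 'a ratfun" where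
  "delta_fun p \<beta> t = (\<Prod>a\<in>{1..p-1}.
      ((ratfun_const \<beta> - (t + of_nat a)) / (t + of_nat a)) ^ a)"

end

theory Submission
  imports Defs "HOL-Number_Theory.Residues"
begin
lemma aux1: fixes a b a' b' A B A' B' :: "'a::comm_ring_1"
  assumes h1: "a * b' = a' * b" and h2: "A * b' + a * B' = A' * b + a' * B"
  shows "(A * b - a * B) * (b' * b') = (A' * b' - a' * B') * (b * b)"
proof -
  have e2: "A * b' = A' * b + a' * B - a * B'" using h2 by (simp add: algebra_simps eq_diff_eq)
  have "(A * b - a * B) * (b' * b') = (A * b') * (b * b') - (a * b') * (B * b')" by (simp add: algebra_simps)
  also have "\<dots> = (A' * b + a' * B - a * B') * (b * b') - (a' * b) * (B * b')"
    by (simp only: h1 e2)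
  also have "\<dots> = A' * b' * (b * b) - (a * b') * (B' * b)" by (simp add: algebra_simps)
  also have "\<dots> = (A' * b' - a' * B') * (b * b)" using h1 by (simp add: algebra_simps)
  finally show ?thesis .
qed

lemma deriv_Fract:
  fixes a b :: "'a::field poly"
  assumes "b \<noteq> 0"
  shows "ratfun_deriv (Fract a b) = Fract (pderiv a * b - a * pderiv b) (b * b)"
  unfolding ratfun_deriv_def
proof (rule the_equality)
  show "\<forall>a' b'. b' \<noteq> 0 \<longrightarrow> Fract a b = Fract a' b' \<longrightarrow>
       Fract (pderiv a * b - a * pderiv b) (b * b) = Fract (pderiv a' * b' - a' * pderiv b') (b' * b')"
  proof (intro allI impI)
    fix a' b' :: "'a poly"
    assume b': "b' \<noteq> 0" and e: "Fract a b = Fract a' b'"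
    have h1: "a * b' = a' * b" using e assms b' by (simp add: eq_fract)
    have h2: "pderiv a * b' + a * pderiv b' = pderiv a' * b + a' * pderiv b"
      using arg_cong[OF h1, of pderiv] by (simp add: pderiv_mult algebra_simps)
    have "(pderiv a * b - a * pderiv b) * (b' * b') = (pderiv a' * b' - a' * pderiv b') * (b * b)"
      using h1 h2 by (rule aux1)
    then show "Fract (pderiv a * b - a * pderiv b) (b * b) = Fract (pderiv a' * b' - a' * pderiv b') (b' * b')"
      using assms b' by (simp add: eq_fract)
  qed
next
  fix d assume "\<forall>a' b'. b' \<noteq> 0 \<longrightarrow> Fract a b = Fract a' b' \<longrightarrow>
       d = Fract (pderiv a' * b' - a' * pderiv b') (b' * b')"
  then show "d = Fract (pderiv a * b - a * pderiv b) (b * b)" using assms by blast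
qed

lemma deriv_add: "ratfun_deriv (f + g :: 'a::field ratfun) = ratfun_deriv f + ratfun_deriv g"
proof -
  obtain a b where f: "f = Fract a b" "b \<noteq> 0" by (cases f)
  obtain c d where g: "g = Fract c d" "d \<noteq> 0" by (cases g)
  show ?thesis using f g
    by (simp add: deriv_Fract eq_fract pderiv_add pderiv_mult pderiv_diff algebra_simps)
qed

lemma deriv_mult: "ratfun_deriv (f * g :: 'a::field ratfun) = ratfun_deriv f * g + f * ratfun_deriv g"
proof -
  obtain a b where f: "f = Fract a b" "b \<noteq> 0" by (cases f)
  obtain c d where g: "g = Fract c d" "d \<noteq> 0" by (cases g)
  show ?thesis using f g
    by (simp add: deriv_Fract eq_fract pderiv_add pderiv_mult pderiv_diff algebra_simps)
qed

lemma deriv_const [simp]: "ratfun_deriv (ratfun_const c) = 0"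
  by (simp add: ratfun_const_def ratfun_of_poly_def deriv_Fract pderiv_pCons Zero_fract_def eq_fract)

lemma deriv_var [simp]: "ratfun_deriv (ratfun_var :: 'a::field ratfun) = 1"
  by (simp add: ratfun_var_def ratfun_of_poly_def deriv_Fract pderiv_pCons One_fract_def eq_fract)

lemma ratfun_const_1 [simp]: "ratfun_const 1 = (1 :: 'a::field ratfun)"
  by (simp add: ratfun_const_def ratfun_of_poly_def One_fract_def flip: one_pCons)

lemma ratfun_const_0 [simp]: "ratfun_const 0 = (0 :: 'a::field ratfun)"
  by (simp add: ratfun_const_def ratfun_of_poly_def Zero_fract_def)

lemma deriv_one [simp]: "ratfun_deriv (1 :: 'a::field ratfun) = 0"
  using deriv_const[of "1::'a"] by simp

lemma deriv_zero [simp]: "ratfun_deriv (0 :: 'a::field ratfun) = 0"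
  using deriv_const[of "0::'a"] by simp

lemma deriv_of_nat [simp]: "ratfun_deriv (of_nat n :: 'a::field ratfun) = 0"
  by (induction n) (simp_all add: deriv_add)

lemma deriv_uminus: "ratfun_deriv (- f :: 'a::field ratfun) = - ratfun_deriv f"
  using deriv_add[of f "-f"] by (simp add: eq_neg_iff_add_eq_0 add.commute)

lemma deriv_diff: "ratfun_deriv (f - g :: 'a::field ratfun) = ratfun_deriv f - ratfun_deriv g"
  using deriv_add[of f "-g"] by (simp add: deriv_uminus)

lemma deriv_power: "ratfun_deriv (f ^ n :: 'a::field ratfun) = of_nat n * f ^ (n - 1) * ratfun_deriv f"
proof (induction n)
  case (Suc n)
  then show ?case by (cases n) (simp_all add: deriv_mult algebra_simps)
qed simp

lemma deriv_inverse:
  assumes "f \<noteq> (0 :: 'a::field ratfun)"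
  shows "ratfun_deriv (inverse f) = - ratfun_deriv f / f ^ 2"
proof -
  have "0 = ratfun_deriv (f * inverse f)" using assms by simp
  also have "\<dots> = ratfun_deriv f * inverse f + f * ratfun_deriv (inverse f)" by (rule deriv_mult)
  finally have e: "ratfun_deriv f * inverse f + f * ratfun_deriv (inverse f) = 0" by simp
  then have "f * ratfun_deriv (inverse f) = - (ratfun_deriv f * inverse f)"
    by (metis add.commute eq_neg_iff_add_eq_0)
  then show ?thesis using assms by (simp add: field_simps power2_eq_square)
qed

lemma dlog_mult:
  assumes "f \<noteq> 0" "g \<noteq> (0 :: 'a::field ratfun)"
  shows "dlog (f * g) = dlog f + dlog g"
  using assms by (simp add: dlog_def deriv_mult field_simps)

lemma dlog_inverse:
  assumes "f \<noteq> (0 :: 'a::field ratfun)"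
  shows "dlog (inverse f) = - dlog f"
  unfolding dlog_def deriv_inverse[OF assms] using assms by (simp add: field_simps power2_eq_square)

lemma dlog_divide:
  assumes "f \<noteq> 0" "g \<noteq> (0 :: 'a::field ratfun)"
  shows "dlog (f / g) = dlog f - dlog g"
  using assms by (simp add: divide_inverse dlog_mult dlog_inverse)

lemma dlog_power:
  assumes "f \<noteq> (0 :: 'a::field ratfun)"
  shows "dlog (f ^ n) = of_nat n * dlog f"
  by (induction n) (simp_all add: dlog_def assms dlog_mult[symmetric] deriv_mult field_simps)

lemma dlog_prod:
  assumes "finite A" "\<And>a. a \<in> A \<Longrightarrow> f a \<noteq> (0 :: 'a::field ratfun)"
  shows "dlog (\<Prod>a\<in>A. f a) = (\<Sum>a\<in>A. dlog (f a))"
  using assms by (induction A rule: finite_induct) (simp_all add: dlog_def dlog_mult[symmetric] deriv_mult field_simps)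


lemma char_field:
  assumes "prime p" "of_nat p = (0::'b::field)"
  shows "CHAR('b) = p"
proof -
  have "CHAR('b) dvd p" using assms(2) by (simp add: of_nat_eq_0_iff_char_dvd)
  moreover have "CHAR('b) \<noteq> 1" by simp
  ultimately show ?thesis using assms(1) by (auto simp: prime_nat_iff)
qed

lemma roots_prod:
  fixes c :: "nat \<Rightarrow> 'b::field"
  assumes p: "prime p" and inj: "inj_on c {1..p}" and r: "\<And>b. b \<in> {1..p} \<Longrightarrow> c b ^ p = c b"
  shows "w ^ p - w = (\<Prod>b\<in>{1..p}. w - c b)"
proof -
  define P :: "'b poly" where "P = Polynomial.monom 1 p - [:0, 1:]"
  define Q :: "'b poly" where "Q = (\<Prod>b\<in>{1..p}. [:- c b, 1:])"
  have p2: "p \<ge> 2" using p by (simp add: prime_ge_2_nat)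
  have degQ: "degree Q = p" unfolding Q_def
    by (subst degree_prod_sum_eq) auto
  have lcQ: "lead_coeff Q = 1" unfolding Q_def by (simp add: lead_coeff_prod)
  have "P = Q"
  proof (rule poly_eqI_degree_lead_coeff[where n = p and A = "c ` {1..p}"])
    show "poly.coeff P p = poly.coeff Q p" using lcQ degQ p2
      by (simp add: P_def coeff_pCons split: nat.splits)
    show "p \<le> card (c ` {1..p})" using inj by (simp add: card_image)
    show "degree P \<le> p" unfolding P_def using p2
      by (intro order.trans[OF degree_diff_le_max]) (auto simp: degree_monom_le)
    show "degree Q \<le> p" using degQ by simp
    fix z assume "z \<in> c ` {1..p}"
    then obtain b where b: "b \<in> {1..p}" "z = c b" by auto
    have "poly Q z = 0" unfolding Q_def poly_prod using b
      by (intro prod_zero) auto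
    moreover have "poly P z = 0" using r[OF b(1)] b by (simp add: P_def poly_monom)
    ultimately show "poly P z = poly Q z" by simp
  qed
  then have "poly P w = poly Q w" by simp
  then show ?thesis by (simp add: P_def Q_def poly_monom poly_prod)
qed

lemma of_nat_pow_char:
  assumes "prime p" "of_nat p = (0::'b::field)"
  shows "(of_nat n :: 'b) ^ p = of_nat n"
proof (induction n)
  case 0 then show ?case using assms by (simp add: prime_gt_0_nat)
next
  case (Suc n)
  have "(of_nat (Suc n) :: 'b) ^ p = (of_nat n + 1) ^ p" by (simp add: add.commute)
  also have "\<dots> = of_nat n ^ p + 1 ^ p"
    by (rule freshmans_dream) (use assms char_field in auto)
  finally show ?case using Suc by (simp add: add.commute)
qed

lemma of_nat_inj_char:
  assumes "prime p" "of_nat p = (0::'b::field)"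
  shows "inj_on (\<lambda>b. of_nat b :: 'b) {1..p}"
proof (rule inj_onI)
  fix i j assume ij: "i \<in> {1..p}" "j \<in> {1..p}" and e: "(of_nat i :: 'b) = of_nat j"
  then have "[i = j] (mod p)" using of_nat_eq_iff_cong_CHAR[of i j, where 'a='b] char_field[OF assms] by simp
  then have "i mod p = j mod p" by (simp add: cong_def)
  moreover have "i mod p = (if i = p then 0 else i)" "j mod p = (if j = p then 0 else j)" using ij by auto
  ultimately show "i = j" using ij by (auto split: if_splits)
qed


lemma key_sum:
  fixes w e :: "'a::field ratfun" and c :: "nat \<Rightarrow> 'a ratfun"
  assumes p0: "of_nat p = (0::'a ratfun)"
    and dc: "\<And>b. b \<in> {1..p} \<Longrightarrow> ratfun_deriv (c b) = 0"
    and nz: "\<And>b. b \<in> {1..p} \<Longrightarrow> w - c b \<noteq> 0"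
    and dw: "ratfun_deriv w = e" and e0: "e \<noteq> 0"
    and pr: "w ^ p - w = (\<Prod>b\<in>{1..p}. w - c b)"
  shows "(\<Sum>b\<in>{1..p}. c b / (w - c b)) = - w / (w ^ p - w)"
proof -
  define N where "N = w ^ p - w"
  have N0: "N \<noteq> 0" unfolding N_def pr using nz by (simp add: prod_zero_iff)
  have "dlog N = (\<Sum>b\<in>{1..p}. dlog (w - c b))" unfolding N_def pr
    by (rule dlog_prod) (use nz in auto)
  also have "\<dots> = (\<Sum>b\<in>{1..p}. e * (1 / (w - c b)))"
    by (intro sum.cong) (auto simp: dlog_def deriv_diff dc dw)
  also have "\<dots> = e * (\<Sum>b\<in>{1..p}. 1 / (w - c b))" by (simp add: sum_distrib_left)
  finally have h1: "dlog N = e * (\<Sum>b\<in>{1..p}. 1 / (w - c b))" .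
  have "dlog N = - e / N" unfolding dlog_def N_def by (simp add: deriv_diff deriv_power dw p0)
  with h1 have h1': "e * (\<Sum>b\<in>{1..p}. 1 / (w - c b)) = - e / N" by simp
  have h2: "(\<Sum>b\<in>{1..p}. 1 / (w - c b)) = - 1 / N"
  proof -
    have "(\<Sum>b\<in>{1..p}. 1 / (w - c b)) = (e * (\<Sum>b\<in>{1..p}. 1 / (w - c b))) / e" using e0 by simp
    also have "\<dots> = - 1 / N" unfolding h1' using e0 by simp
    finally show ?thesis .
  qed
  have "(\<Sum>b\<in>{1..p}. c b / (w - c b)) = (\<Sum>b\<in>{1..p}. w * (1 / (w - c b)) - 1)"
    by (intro sum.cong) (use nz in \<open>auto simp: field_simps\<close>)
  also have "\<dots> = w * (\<Sum>b\<in>{1..p}. 1 / (w - c b)) - of_nat p"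
    by (simp add: sum_subtractf sum_distrib_left)
  also have "\<dots> = - w / N" using h2 p0 by simp
  finally show ?thesis by (simp add: N_def)
qed

lemma telescope:
  fixes g :: "nat \<Rightarrow> 'b::comm_monoid_mult"
  shows "(\<Prod>a\<in>{1..n}. g (Suc a) ^ a) * (\<Prod>b\<in>{1..Suc n}. g b) = (\<Prod>b\<in>{1..Suc n}. g b ^ b)"
proof (induction n)
  case 0 then show ?case by simp
next
  case (Suc n)
  have "(\<Prod>a\<in>{1..Suc n}. g (Suc a) ^ a) * (\<Prod>b\<in>{1..Suc (Suc n)}. g b)
      = ((\<Prod>a\<in>{1..n}. g (Suc a) ^ a) * (\<Prod>b\<in>{1..Suc n}. g b)) * (g (Suc (Suc n)) ^ Suc n * g (Suc (Suc n)))"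
    by (simp add: prod.cl_ivl_Suc mult_ac)
  also have "\<dots> = (\<Prod>b\<in>{1..Suc (Suc n)}. g b ^ b)"
    using Suc by (simp add: prod.cl_ivl_Suc mult_ac)
  finally show ?case .
qed


lemma ratfun_const_add: "ratfun_const (a + b) = ratfun_const a + (ratfun_const b :: 'a::field ratfun)"
  by (simp add: ratfun_const_def ratfun_of_poly_def)
lemma ratfun_const_diff: "ratfun_const (a - b) = ratfun_const a - (ratfun_const b :: 'a::field ratfun)"
  by (simp add: ratfun_const_def ratfun_of_poly_def)
lemma ratfun_const_uminus: "ratfun_const (- a) = - (ratfun_const a :: 'a::field ratfun)"
  using ratfun_const_diff[of 0 a] by simp
lemma ratfun_const_mult: "ratfun_const (a * b) = ratfun_const a * (ratfun_const b :: 'a::field ratfun)"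
  by (simp add: ratfun_const_def ratfun_of_poly_def mult.commute)
lemma ratfun_const_power: "ratfun_const (a ^ n) = (ratfun_const a :: 'a::field ratfun) ^ n"
  by (induction n) (simp_all add: ratfun_const_mult)
lemma ratfun_const_of_nat: "ratfun_const (of_nat n) = (of_nat n :: 'a::field ratfun)"
  by (induction n) (simp_all add: ratfun_const_add)

lemma var_minus_const_nz: "(ratfun_var :: 'a::field ratfun) - ratfun_const c \<noteq> 0"
proof -
  have "[:0, 1:] - [:c:] \<noteq> (0 :: 'a poly)" by simp
  then show ?thesis
    by (simp add: ratfun_var_def ratfun_const_def ratfun_of_poly_def Zero_fract_def eq_fract)
qed

lemma char_card:
  assumes "prime p" "card (UNIV :: 'a::{field,finite} set) = p ^ 2"
  shows "of_nat p = (0 :: 'a)"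
proof -
  have pos: "CHAR('a) > 0" by (rule finite_imp_CHAR_pos) simp
  then have pr: "prime CHAR('a)" by (rule prime_CHAR_semidom)
  have "CHAR('a) dvd p ^ 2" using CHAR_dvd_CARD[where 'a='a] assms(2) by simp
  then have "CHAR('a) dvd p" using pr prime_dvd_power by blast
  then have "CHAR('a) = p" using pr assms(1) primes_dvd_imp_eq by blast
  then show ?thesis by (metis of_nat_CHAR)
qed


theorem mainTheorem12:
  fixes p :: nat and \<beta> :: "'a::{field, finite}"
  assumes "prime p"
    and "card (UNIV :: 'a set) = p ^ 2"
    and "\<beta> ^ p - \<beta> = 1"
  defines "y \<equiv> (ratfun_var :: 'a ratfun)"
  defines "x \<equiv> y ^ p - y"
  shows "y ^ p * (ratfun_deriv x / x)
           - (ratfun_const \<beta> - y) ^ p * (ratfun_deriv x / (1 - x))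
         = dlog (delta_fun p \<beta> y)
         \<and> (\<exists>r :: 'a ratfun. r \<noteq> 0 \<and>
           delta_fun p \<beta> (y + 1) / delta_fun p \<beta> y = (x / (1 - x)) * r ^ p)"
proof -
  note pp = assms(1)
  have pa: "of_nat p = (0::'a)" using char_card assms(1,2) by blast
  have p0: "of_nat p = (0::'a ratfun)"
  proof -
    have "(of_nat p :: 'a ratfun) = ratfun_const (of_nat p)" by (simp only: ratfun_const_of_nat)
    also have "\<dots> = 0" by (simp only: pa ratfun_const_0)
    finally show ?thesis .
  qed
  have charK: "CHAR('a ratfun) = p" by (rule char_field[OF pp p0])
  have p1: "p \<ge> 1" using pp prime_gt_0_nat by (simp add: Suc_leI)
  define B where "B = (ratfun_const \<beta> :: 'a ratfun)"
  define z where "z = B - y"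
  have nzc: "\<And>c. y - ratfun_const c \<noteq> 0" unfolding y_def by (rule var_minus_const_nz)
  have nzY: "y + of_nat b \<noteq> 0" for b
  proof -
    have "ratfun_const (- of_nat b) = - (of_nat b :: 'a ratfun)"
      by (simp only: ratfun_const_uminus ratfun_const_of_nat)
    then show ?thesis using nzc[of "- of_nat b"] by simp
  qed
  have nzz: "z - of_nat b \<noteq> 0" for b
  proof -
    have "z - of_nat b = - (y - ratfun_const (\<beta> - of_nat b))"
      by (simp add: z_def B_def ratfun_const_diff ratfun_const_of_nat)
    then show ?thesis using nzc[of "\<beta> - of_nat b"] by (metis neg_equal_0_iff_equal)
  qed
  have Bp: "B ^ p - B = 1" unfolding B_def
    by (metis assms(3) ratfun_const_1 ratfun_const_diff ratfun_const_power)
  have injn: "inj_on (\<lambda>b. of_nat b :: 'a ratfun) {1..p}" by (rule of_nat_inj_char[OF pp p0])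
  have injm: "inj_on (\<lambda>b. - of_nat b :: 'a ratfun) {1..p}"
    using injn unfolding inj_on_def by (metis neg_equal_iff_equal)
  have powm: "(- w :: 'a ratfun) ^ p = - (w ^ p)" for w
    by (rule minus_power_prime_CHAR) (use charK pp in auto)
  have prodY: "y ^ p - y = (\<Prod>b\<in>{1..p}. y - (- of_nat b))"
    by (rule roots_prod[OF pp injm]) (simp add: powm of_nat_pow_char[OF pp p0])
  have prodz: "z ^ p - z = (\<Prod>b\<in>{1..p}. z - of_nat b)"
    by (rule roots_prod[OF pp injn]) (simp add: of_nat_pow_char[OF pp p0])
  have zp: "z ^ p = B ^ p - y ^ p"
  proof -
    have "z ^ p = (B + (- y)) ^ p" by (simp add: z_def)
    also have "\<dots> = B ^ p + (- y) ^ p" by (rule freshmans_dream) (use charK pp in auto)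
    finally show ?thesis by (simp add: powm)
  qed
  have onemx: "1 - x = z ^ p - z" unfolding x_def using zp Bp by (simp add: z_def algebra_simps)
  have Dy: "ratfun_deriv y = 1" by (simp add: y_def)
  have Dz: "ratfun_deriv z = -1" by (simp add: z_def B_def deriv_diff Dy)
  have Dx: "ratfun_deriv x = -1" by (simp add: x_def deriv_diff deriv_power Dy p0)
  have NY: "y ^ p - y \<noteq> 0" unfolding prodY using nzY by (simp add: prod_zero_iff)
  have Nz: "z ^ p - z \<noteq> 0" unfolding prodz using nzz by (simp add: prod_zero_iff)
  have SY: "(\<Sum>b\<in>{1..p}. (- of_nat b) / (y - (- of_nat b))) = - y / (y ^ p - y)"
    by (rule key_sum[OF p0 _ _ Dy _ prodY]) (use nzY in \<open>auto simp: deriv_uminus\<close>)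
  have Sz: "(\<Sum>b\<in>{1..p}. of_nat b / (z - of_nat b)) = - z / (z ^ p - z)"
    by (rule key_sum[OF p0 _ _ Dz _ prodz]) (use nzz in auto)
  have zB: "ratfun_const \<beta> - y = z" by (simp add: z_def B_def)
  have pS: "{1..p} = insert p {1..p-1}" "p \<notin> {1..p-1}" using p1 by auto
  define f where "f a = (B - (y + of_nat a)) / (y + of_nat a)" for a :: nat
  have fz: "B - (y + of_nat a) = z - of_nat a" for a by (simp add: z_def)
  have fnz: "f a \<noteq> 0" for a unfolding f_def fz using nzz nzY by simp
  have delta_eq: "delta_fun p \<beta> y = (\<Prod>a\<in>{1..p-1}. f a ^ a)"
    unfolding delta_fun_def f_def B_def ..
  have dnz: "delta_fun p \<beta> y \<noteq> 0" unfolding delta_eq using fnz by (simp add: prod_zero_iff)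
  define T where "T a = - (of_nat a / (z - of_nat a)) + (- of_nat a) / (y - (- of_nat a))" for a :: nat
  have dlf: "dlog (f a ^ a) = T a" for a
  proof -
    have "dlog (f a ^ a) = of_nat a * (dlog (z - of_nat a) - dlog (y + of_nat a))"
      unfolding f_def fz using nzz nzY by (simp add: dlog_power dlog_divide)
    also have "\<dots> = T a" unfolding T_def dlog_def using nzz nzY
      by (simp add: deriv_diff deriv_add Dz Dy field_simps)
    finally show ?thesis .
  qed
  have part1: "dlog (delta_fun p \<beta> y) = z / (z ^ p - z) - y / (y ^ p - y)"
  proof -
    have "dlog (delta_fun p \<beta> y) = (\<Sum>a\<in>{1..p-1}. T a)"
      unfolding delta_eq using fnz by (simp add: dlog_prod dlog_power dlf)
    also have "\<dots> = (\<Sum>a\<in>{1..p}. T a)" unfolding pS(1) using pS(2) by (simp add: T_def p0)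
    also have "\<dots> = - (\<Sum>a\<in>{1..p}. of_nat a / (z - of_nat a)) + (\<Sum>a\<in>{1..p}. (- of_nat a) / (y - (- of_nat a)))"
      unfolding T_def by (simp add: sum_subtractf sum_negf)
    also have "\<dots> = z / (z ^ p - z) - y / (y ^ p - y)" unfolding Sz SY by simp
    finally show ?thesis .
  qed
  have lhs: "y ^ p * (ratfun_deriv x / x) - (ratfun_const \<beta> - y) ^ p * (ratfun_deriv x / (1 - x))
      = z / (z ^ p - z) - y / (y ^ p - y)"
    unfolding zB onemx Dx using NY Nz unfolding x_def by (simp add: field_simps)
  have shift: "delta_fun p \<beta> (y + 1) = (\<Prod>a\<in>{1..p-1}. f (Suc a) ^ a)"
    unfolding delta_fun_def f_def B_def by (intro prod.cong) (simp_all add: add_ac)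
  have tel: "(\<Prod>a\<in>{1..p-1}. f (Suc a) ^ a) * (\<Prod>b\<in>{1..p}. f b) = (\<Prod>b\<in>{1..p}. f b ^ b)"
    using telescope[of f "p - 1"] p1 by simp
  have xnz: "x \<noteq> 0" using NY by (simp add: x_def)
  have x1nz: "1 - x \<noteq> 0" using Nz by (simp add: onemx)
  have pf: "(\<Prod>b\<in>{1..p}. f b) = (1 - x) / x"
  proof -
    have "(\<Prod>b\<in>{1..p}. f b) = (\<Prod>b\<in>{1..p}. z - of_nat b) / (\<Prod>b\<in>{1..p}. y - (- of_nat b))"
      unfolding f_def fz by (simp add: prod_dividef)
    also have "\<dots> = (1 - x) / x" unfolding prodz[symmetric] prodY[symmetric] onemx by (simp add: x_def)
    finally show ?thesis .
  qed
  have lst: "(\<Prod>b\<in>{1..p}. f b ^ b) = delta_fun p \<beta> y * f p ^ p"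
    unfolding pS(1) delta_eq using pS(2) by (simp add: mult.commute)
  have fp: "f p = z / y" unfolding f_def fz by (simp add: p0)
  have main2: "delta_fun p \<beta> (y + 1) * ((1 - x) / x) = delta_fun p \<beta> y * (z / y) ^ p"
    using tel unfolding shift[symmetric] pf lst fp .
  have part2: "delta_fun p \<beta> (y + 1) / delta_fun p \<beta> y = (x / (1 - x)) * (z / y) ^ p"
  proof -
    define R where "R = (z / y) ^ p"
    have c1: "((1 - x) / x) * (x / (1 - x)) = 1" using xnz x1nz by simp
    have "delta_fun p \<beta> (y + 1) = delta_fun p \<beta> (y + 1) * ((1 - x) / x) * (x / (1 - x))"
      using c1 by (metis mult.assoc mult.right_neutral)
    also have "\<dots> = delta_fun p \<beta> y * R * (x / (1 - x))" unfolding main2 R_def ..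
    finally have "delta_fun p \<beta> (y + 1) = delta_fun p \<beta> y * (R * (x / (1 - x)))" by (simp add: mult.assoc)
    then show ?thesis using dnz unfolding R_def by (simp add: mult.commute)
  qed
  have rnz: "z / y \<noteq> 0" using nzz[of 0] nzY[of 0] by simp
  show ?thesis using lhs part1 part2 rnz by (metis)
qed
end
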